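(* Let $R$ be a field, and let $\ell,\ell'\in R[x]$ be of degree $1$; write $\ell'=r\ell-s$ with $r\in R^{*}$ and $s\in R$. Then $\ell'\sim\ell$ if and only if exactly one of the following holds: (1) $r=1$ and $s=0$ (i.e. $\ell'=\ell$); or (2) $r\neq1$, $s\neq0$, and $\frac{s}{r-1}$ has infinite multiplicative order in $R^{*}$.
   Context: For a ring $S$ and $\ell,\ell'\in S$, $\ell$ and $\ell'$ are called 1-connected, written $\ell\sim\ell'$, if for all positive integers $m,n$ such that $(\ell-\ell')\mid(\ell^m-(\ell')^n)$ we must have $m=n$. $R[x]$ is the polynomial ring in one indeterminate over the field $R$. *)

theory Defs
  imports "HOL-Computational_Algebra.Polynomial"
begin

definition one_connected :: "'a::comm_ring_1 \<Rightarrow> 'a \<Rightarrow> bool" where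
  "one_connected l l' \<longleftrightarrow>
     (\<forall>m n::nat. 0 < m \<longrightarrow> 0 < n \<longrightarrow> (l - l') dvd (l ^ m - l' ^ n) \<longrightarrow> m = n)"

definition infinite_mult_order :: "'a::field \<Rightarrow> bool" where
  "infinite_mult_order a \<longleftrightarrow> a \<noteq> 0 \<and> (\<forall>n::nat. 0 < n \<longrightarrow> a ^ n \<noteq> 1)"

end

theory Submission
  imports Defs
begin

lemma lin_dvd_iff:
  fixes c0 c1 x0 :: "'a::field"
  assumes "c1 \<noteq> 0" "c0 + c1 * x0 = 0"
  shows "[:c0, c1:] dvd p \<longleftrightarrow> poly p x0 = 0"
proof -
  have "[:c0, c1:] = smult c1 [:-x0, 1:]"
    using assms by (simp add: algebra_simps eq_neg_iff_add_eq_0)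
  then show ?thesis using assms by (simp only: smult_dvd_iff poly_eq_0_iff_dvd) simp
qed

theorem lemma2p7:
  fixes l l' :: "'a::field poly" and r s :: 'a
  assumes "degree l = 1" and "degree l' = 1"
    and "r \<noteq> 0"
    and "l' = smult r l - [:s:]"
  shows "one_connected l' l \<longleftrightarrow>
           ((r = 1 \<and> s = 0) \<and> \<not> (r \<noteq> 1 \<and> s \<noteq> 0 \<and> infinite_mult_order (s / (r - 1))))
         \<or> ((r \<noteq> 1 \<and> s \<noteq> 0 \<and> infinite_mult_order (s / (r - 1))) \<and> \<not> (r = 1 \<and> s = 0))"
proof -
  define a0 where "a0 = coeff l 0"
  define a1 where "a1 = coeff l 1"
  have l0: "l \<noteq> 0" using assms(1) by (intro notI) simp
  have a1: "a1 \<noteq> 0" using leading_coeff_neq_0[OF l0] assms(1) unfolding a1_def by simp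
  have l: "l = [:a0, a1:]"
  proof (rule poly_eqI)
    fix n show "coeff l n = coeff [:a0, a1:] n"
      using assms(1) unfolding a0_def a1_def
      by (cases n; cases "n - 1") (auto simp: coeff_eq_0)
  qed
  show ?thesis
  proof (cases "r = 1")
    case True
    note r1 = True
    show ?thesis
    proof (cases "s = 0")
      case True
      have "l' = l" using assms(4) r1 True by simp
      have "one_connected l' l"
        unfolding one_connected_def
      proof (intro allI impI)
        fix m n :: nat assume "0 < m" "0 < n" "(l' - l) dvd (l' ^ m - l ^ n)"
        hence "l ^ m = l ^ n" using \<open>l' = l\<close> by simp
        hence "degree (l ^ m) = degree (l ^ n)" by simp
        moreover note l0
        ultimately show "m = n" using assms(1) by (simp add: degree_power_eq)
      qed
      thus ?thesis using r1 True by simp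
    next
      case False
      have d: "l' - l = [:-s:]" using assms(4) r1 by simp
      have "(l' - l) dvd (l' ^ 1 - l ^ 2)"
        unfolding d using False
        by (metis const_poly_dvd_iff dvd_field_iff neg_equal_0_iff_equal)
      have "\<not> one_connected l' l"
      proof
        assume "one_connected l' l"
        hence "0 < (1::nat) \<longrightarrow> 0 < (2::nat) \<longrightarrow> (l' - l) dvd (l' ^ 1 - l ^ 2) \<longrightarrow> (1::nat) = 2"
          unfolding one_connected_def by (elim allE)
        thus False using \<open>(l' - l) dvd (l' ^ 1 - l ^ 2)\<close> by simp
      qed
      thus ?thesis using r1 False by simp
    qed
  next
    case False
    define t where "t = s / (r - 1)"
    have rt: "(r - 1) * t = s" using False by (simp add: t_def)
    define x0 where "x0 = (t - a0) / a1"
    have px: "a0 + a1 * x0 = t" using a1 by (simp add: x0_def)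
    have d: "l' - l = [:(r - 1) * a0 - s, (r - 1) * a1:]"
      using assms(4) l by (simp add: algebra_simps)
    have root: "((r - 1) * a0 - s) + (r - 1) * a1 * x0 = 0"
    proof -
      have "((r - 1) * a0 - s) + (r - 1) * a1 * x0 = (r - 1) * (a0 + a1 * x0) - s"
        by (simp add: algebra_simps)
      thus ?thesis using px rt by simp
    qed
    have pl: "poly l x0 = t" using l px by (simp add: mult.commute)
    have pl': "poly l' x0 = t"
    proof -
      have "poly l' x0 = r * t - s" using assms(4) pl by simp
      also have "\<dots> = t" using rt by (simp add: algebra_simps)
      finally show ?thesis .
    qed
    have key: "(l' - l) dvd (l' ^ m - l ^ n) \<longleftrightarrow> t ^ m = t ^ n" for m n
      unfolding d using lin_dvd_iff[OF _ root] False a1 pl pl' by simp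
    have oc: "one_connected l' l \<longleftrightarrow> (\<forall>m n::nat. 0 < m \<longrightarrow> 0 < n \<longrightarrow> t ^ m = t ^ n \<longrightarrow> m = n)"
      unfolding one_connected_def key ..
    show ?thesis
    proof (cases "s = 0")
      case True
      hence "t = 0" by (simp add: t_def)
      hence "t ^ 1 = t ^ 2" by simp
      have "\<not> one_connected l' l" unfolding oc
      proof
        assume "\<forall>m n::nat. 0 < m \<longrightarrow> 0 < n \<longrightarrow> t ^ m = t ^ n \<longrightarrow> m = n"
        hence "0 < (1::nat) \<longrightarrow> 0 < (2::nat) \<longrightarrow> t ^ 1 = t ^ 2 \<longrightarrow> (1::nat) = 2"
          by (elim allE)
        thus False using \<open>t ^ 1 = t ^ 2\<close> by simp
      qed
      thus ?thesis using True False by simp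
    next
      case s0: False
      have t0: "t \<noteq> 0" using s0 rt by auto
      have "(\<forall>m n::nat. 0 < m \<longrightarrow> 0 < n \<longrightarrow> t ^ m = t ^ n \<longrightarrow> m = n) \<longleftrightarrow>
            (\<forall>k::nat. 0 < k \<longrightarrow> t ^ k \<noteq> 1)"
      proof
        assume H: "\<forall>m n::nat. 0 < m \<longrightarrow> 0 < n \<longrightarrow> t ^ m = t ^ n \<longrightarrow> m = n"
        show "\<forall>k::nat. 0 < k \<longrightarrow> t ^ k \<noteq> 1"
        proof (intro allI impI notI)
          fix k :: nat assume k: "0 < k" "t ^ k = 1"
          have "t ^ (k + 1) = t ^ 1" using k by (simp add: power_add)
          moreover have "0 < k + 1 \<longrightarrow> 0 < (1::nat) \<longrightarrow> t ^ (k+1) = t ^ 1 \<longrightarrow> k + 1 = 1"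
            using H by (elim allE)
          ultimately show False using k by simp
        qed
      next
        assume H: "\<forall>k::nat. 0 < k \<longrightarrow> t ^ k \<noteq> 1"
        show "\<forall>m n::nat. 0 < m \<longrightarrow> 0 < n \<longrightarrow> t ^ m = t ^ n \<longrightarrow> m = n"
        proof (intro allI impI)
          fix m n :: nat assume mn: "0 < m" "0 < n" "t ^ m = t ^ n"
          show "m = n"
          proof (rule ccontr)
            assume "m \<noteq> n"
            then consider "m < n" | "n < m" by linarith
            thus False
            proof cases
              case 1
              then obtain k where "n = m + k" "0 < k" by (metis less_imp_add_positive)
              hence "t ^ m * t ^ k = t ^ m * 1" using mn by (simp add: power_add)
              hence "t ^ k = 1" using t0 by simp
              thus False using H \<open>0 < k\<close> by blast
            next
              case 2
              then obtain k where "m = n + k" "0 < k" by (metis less_imp_add_positive)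
              hence "t ^ n * t ^ k = t ^ n * 1" using mn by (simp add: power_add)
              hence "t ^ k = 1" using t0 by simp
              thus False using H \<open>0 < k\<close> by blast
            qed
          qed
        qed
      qed
      thus ?thesis using oc False s0 t0 unfolding infinite_mult_order_def t_def by simp
    qed
  qed
qed

end
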